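(* Let $\Sigma$ be a finite alphabet and let $f:\Sigma^*\to\Sigma^*$ be a function computed by a Turing machine $\mathcal{M} = (\Sigma_\Box, Q, q_{in}, q_{fin}, \delta)$ in time $g:\mathbb{N}\to\mathbb{N}$. Then there exist a closed term $\overline{\mathcal{M}}\in\Lambda_{\mathtt{det}}$ and constants $A,B,C>0$ (depending only on $\mathcal{M}$) such that for every $s\in\Sigma^*$, $$\overline{\mathcal{M}}\;\ulcorner s\urcorner^{\Sigma^*} \to_{\mathtt{det}}^{n} \ulcorner f(s)\urcorner^{\Sigma^*}$$ for some $n$ with $A\,(g(|s|)+|s|) \le n \le B\,(g(|s|)+|s|) + C$, i.e. $n = \Theta(g(|s|)+|s|)$.
   Context: The deterministic $\lambda$-calculus $\Lambda_{\mathtt{det}}$ has terms and values given by the grammar: terms $t ::= v \mid t\,v$; values $v ::= \lambda x.t \mid x$. Evaluation contexts are $E ::= [\cdot] \mid E\,v$ (they never enter abstractions). The reduction $\to_{\mathtt{det}}$ is the closure under evaluation contexts of $(\lambda x.t)\,s \mapsto t\{x:=s\}$; $t \to_{\mathtt{det}}^n s$ means $t$ reduces to $s$ in exactly $n$ steps. Application associates to the left. Scott encoding: for a finite totally ordered alphabet $\Gamma = \{c_1,\dots,c_m\}$, $\ulcorner c_i\urcorner^{\Gamma} := \lambda x_1.\cdots.\lambda x_m.x_i$, $\ulcorner \varepsilon\urcorner^{\Gamma^*} := \lambda x_1.\cdots.\lambda x_m.\lambda y.y$ and $\ulcorner c_i r\urcorner^{\Gamma^*} := \lambda x_1.\cdots.\lambda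 x_m.\lambda y.\,x_i\,\ulcorner r\urcorner^{\Gamma^*}$. Turing machines: $\mathcal{M} = (\Sigma_\Box, Q, q_{in}, q_{fin}, \delta)$ where $\Sigma$ is a finite alphabet, $\Sigma_\Box = \Sigma\cup\{\Box\}$ with blank symbol $\Box\notin\Sigma$, $Q$ is a finite set of states, $q_{in},q_{fin}\in Q$, and $\delta : Q\times\Sigma_\Box \rightharpoonup Q\times\Sigma_\Box\times\{\leftarrow,\rightarrow,\downarrow\}$ is defined exactly on pairs with first component $\neq q_{fin}$. A configuration is $(s,a,r,q)\in\Sigma_\Box^*\times\Sigma_\Box\times\Sigma_\Box^*\times Q$ (tape left of the head, head cell, tape right of the head, state). The transition relation $\to_{\mathcal{M}}$: if $\delta(q,a) = (q',b,\downarrow)$ then $(s,a,r,q)\to_{\mathcal{M}}(s,b,r,q')$; if $\delta(q,a)=(q',b,\leftarrow)$ then $(s'c,a,r,q)\to_{\mathcal{M}}(s',c,br,q')$ and $(\varepsilon,a,r,q)\to_{\mathcal{M}}(\varepsilon,\Box,br,q')$; if $\delta(q,a)=(q',b,\rightarrow)$ then $(s,a,cr',q)\to_{\mathcal{M}}(sb,c,r',q')$ and $(s,a,\varepsilon,q)\to_{\mathcal{M}}(sb,\Box,\varepsilon,q')$. The initial configuration for $s\in\Sigma^*$ is $(\varepsilon,\Box,s,q_{in})$ and the final configuration for $s$ is $(\varepsilon,\Box,s,q_{fin})$. $\mathcal{M}$ computes $f:\Sigma^*\to\Sigma^*$ in time $g$ if for every $s\in\Sigma^*$ the initial configuration for $s$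 evolves via $\to_{\mathcal{M}}$ to the final configuration for $f(s)$ in exactly $g(|s|)$ steps. *)

theory Defs
  imports Complex_Main
begin

datatype trm = Val val | App trm val
and val = Var nat | Lam trm

fun lift_t :: "nat \<Rightarrow> trm \<Rightarrow> trm" and lift_v :: "nat \<Rightarrow> val \<Rightarrow> val" where
  "lift_t k (Val v) = Val (lift_v k v)"
| "lift_t k (App t v) = App (lift_t k t) (lift_v k v)"
| "lift_v k (Var i) = Var (if i < k then i else Suc i)"
| "lift_v k (Lam t) = Lam (lift_t (Suc k) t)"

fun subst_t :: "nat \<Rightarrow> val \<Rightarrow> trm \<Rightarrow> trm" and subst_v :: "nat \<Rightarrow> val \<Rightarrow> val \<Rightarrow> val" where
  "subst_t k s (Val v) = Val (subst_v k s v)"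
| "subst_t k s (App t v) = App (subst_t k s t) (subst_v k s v)"
| "subst_v k s (Var i) = (if i < k then Var i else if i = k then s else Var (i - 1))"
| "subst_v k s (Lam t) = Lam (subst_t (Suc k) (lift_v 0 s) t)"

inductive det_step :: "trm \<Rightarrow> trm \<Rightarrow> bool" where
  beta: "det_step (App (Val (Lam t)) s) (subst_t 0 s t)"
| ctx: "det_step t t' \<Longrightarrow> det_step (App t v) (App t' v)"

fun closed_t :: "nat \<Rightarrow> trm \<Rightarrow> bool" and closed_v :: "nat \<Rightarrow> val \<Rightarrow> bool" where
  "closed_t k (Val v) = closed_v k v"
| "closed_t k (App t v) = (closed_t k t \<and> closed_v k v)"
| "closed_v k (Var i) = (i < k)"
| "closed_v k (Lam t) = closed_t (Suc k) t"

definition closed :: "trm \<Rightarrow> bool" where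
  "closed t = closed_t 0 t"

text \<open>The alphabet is the finite type 'a, ordered by its linear order: c_1 < ... < c_m.\<close>
definition alph :: "'a::{finite,linorder} list" where
  "alph = sorted_list_of_set (UNIV :: 'a set)"

fun pos_in :: "'a list \<Rightarrow> 'a \<Rightarrow> nat" where
  "pos_in [] c = 0"
| "pos_in (x # xs) c = (if x = c then 0 else Suc (pos_in xs c))"

text \<open>0-based position of c in the ordering (c = c_(i+1)).\<close>
definition sym_idx :: "'a::{finite,linorder} \<Rightarrow> nat" where
  "sym_idx c = pos_in (alph :: 'a list) c"

fun lams :: "nat \<Rightarrow> trm \<Rightarrow> trm" where
  "lams 0 t = t"
| "lams (Suc n) t = Val (Lam (lams n t))"

text \<open>enc [] = lambda x_1 ... x_m y. y ;  enc (c_i r) = lambda x_1 ... x_m y. x_i (enc r).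
  Under the m+1 binders, y has index 0 and x_i has index m - i + 1.\<close>
fun enc_str :: "'a::{finite,linorder} list \<Rightarrow> val" where
  "enc_str [] = Lam (lams (length (alph :: 'a list)) (Val (Var 0)))"
| "enc_str (c # r) = Lam (lams (length (alph :: 'a list))
      (App (Val (Var (length (alph :: 'a list) - sym_idx c))) (enc_str r)))"

text \<open>Tape symbols: 'a option, with None the blank symbol.\<close>
datatype dir = DLeft | DRight | DStay

record ('a, 'q) tm =
  q_in :: 'q
  q_fin :: 'q
  delta :: "'q \<Rightarrow> 'a option \<Rightarrow> ('q \<times> 'a option \<times> dir) option"

definition valid_tm :: "('a, 'q) tm \<Rightarrow> bool" where
  "valid_tm M = (\<forall>q a. (delta M q a \<noteq> None) \<longleftrightarrow> q \<noteq> q_fin M)"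

text \<open>Configuration (s, a, r, q): s is the tape left of the head (last element adjacent to the head).\<close>
type_synonym ('a, 'q) config = "'a option list \<times> 'a option \<times> 'a option list \<times> 'q"

inductive tm_step :: "('a, 'q) tm \<Rightarrow> ('a, 'q) config \<Rightarrow> ('a, 'q) config \<Rightarrow> bool" for M where
  stay: "delta M q a = Some (q', b, DStay) \<Longrightarrow> tm_step M (s, a, r, q) (s, b, r, q')"
| left: "delta M q a = Some (q', b, DLeft) \<Longrightarrow> tm_step M (s' @ [c], a, r, q) (s', c, b # r, q')"
| left_end: "delta M q a = Some (q', b, DLeft) \<Longrightarrow> tm_step M ([], a, r, q) ([], None, b # r, q')"
| right: "delta M q a = Some (q', b, DRight) \<Longrightarrow> tm_step M (s, a, c # r', q) (s @ [b], c, r', q')"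
| right_end: "delta M q a = Some (q', b, DRight) \<Longrightarrow> tm_step M (s, a, [], q) (s @ [b], None, [], q')"

definition computes_in_time :: "('a, 'q) tm \<Rightarrow> ('a list \<Rightarrow> 'a list) \<Rightarrow> (nat \<Rightarrow> nat) \<Rightarrow> bool" where
  "computes_in_time M f g =
    (\<forall>s. ((tm_step M) ^^ g (length s)) ([], None, map Some s, q_in M)
                                      ([], None, map Some (f s), q_fin M))"

end

theory Submission
  imports Defs
begin


lemma closed_mono:
  fixes t :: trm and v :: val
  shows "closed_t j t \<Longrightarrow> j \<le> k \<Longrightarrow> closed_t k t"
    and "closed_v j v \<Longrightarrow> j \<le> k \<Longrightarrow> closed_v k v"
  by (induct t and v arbitrary: j k and j k) auto

lemma lift_closed:
  fixes t :: trm and v :: val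
  shows "closed_t j t \<Longrightarrow> j \<le> k \<Longrightarrow> lift_t k t = t"
    and "closed_v j v \<Longrightarrow> j \<le> k \<Longrightarrow> lift_v k v = v"
  by (induct t and v arbitrary: j k and j k) auto

lemma subst_closed:
  fixes t :: trm and v :: val
  shows "closed_t j t \<Longrightarrow> j \<le> k \<Longrightarrow> subst_t k s t = t"
    and "closed_v j v \<Longrightarrow> j \<le> k \<Longrightarrow> subst_v k s v = v"
  by (induct t and v arbitrary: j k s and j k s) auto

lemma lift0[simp]: "closed_v 0 v \<Longrightarrow> lift_v k v = v"
  using lift_closed(2) by blast
lemma substv0[simp]: "closed_v 0 v \<Longrightarrow> subst_v k s v = v"
  using subst_closed(2) by blast
lemma substt0[simp]: "closed_t 0 t \<Longrightarrow> subst_t k s t = t"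
  using subst_closed(1) by blast

lemma subst_lams[simp]: "closed_v 0 s \<Longrightarrow> subst_t k s (lams n t) = lams n (subst_t (k + n) s t)"
  by (induct n arbitrary: k) auto

lemma closed_lams[simp]: "closed_t k (lams n t) = closed_t (k + n) t"
  by (induct n arbitrary: k) auto

fun apps :: "trm \<Rightarrow> val list \<Rightarrow> trm" where
  "apps t [] = t"
| "apps t (v # vs) = apps (App t v) vs"

lemma apps_append: "apps t (xs @ ys) = apps (apps t xs) ys"
  by (induct xs arbitrary: t) auto

lemma subst_apps[simp]: "subst_t k s (apps t ws) = apps (subst_t k s t) (map (subst_v k s) ws)"
  by (induct ws arbitrary: t) auto

lemma closed_apps[simp]: "closed_t k (apps t ws) = (closed_t k t \<and> (\<forall>w\<in>set ws. closed_v k w))"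
  by (induct ws arbitrary: t) auto

lemma steps_App: "(det_step ^^ n) t t' \<Longrightarrow> (det_step ^^ n) (App t v) (App t' v)"
proof (induct n arbitrary: t')
  case 0 then show ?case by simp
next
  case (Suc n)
  from Suc.prems obtain y where "(det_step ^^ n) t y" "det_step y t'" by (auto elim: relpowp_Suc_E)
  then show ?case using Suc.hyps det_step.ctx by (meson relpowp_Suc_I)
qed

lemma step_apps: "det_step t t' \<Longrightarrow> det_step (apps t ws) (apps t' ws)"
  by (induct ws arbitrary: t t') (auto intro: det_step.ctx)

lemma steps_apps: "(det_step ^^ n) t t' \<Longrightarrow> (det_step ^^ n) (apps t ws) (apps t' ws)"
  by (induct ws arbitrary: t t') (auto intro: steps_App)

lemma steps_trans: "(det_step ^^ a) x y \<Longrightarrow> (det_step ^^ b) y z \<Longrightarrow> (det_step ^^ (a + b)) x z"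
  by (auto simp: relpowp_add)

fun substs :: "val list \<Rightarrow> trm \<Rightarrow> trm" where
  "substs [] b = b"
| "substs (v # vs) b = substs vs (subst_t (length vs) v b)"

lemma beta_n:
  assumes "length vs = Suc n" "\<forall>v\<in>set vs. closed_v 0 v"
  shows "(det_step ^^ Suc n) (apps (Val (Lam (lams n b))) (vs @ ws)) (apps (substs vs b) ws)"
  using assms
proof (induct n arbitrary: vs b)
  case 0
  then obtain v where vs: "vs = [v]" by (cases vs) auto
  have "det_step (App (Val (Lam b)) v) (subst_t 0 v b)" by (rule det_step.beta)
  then show ?case using vs by (auto intro: step_apps)
next
  case (Suc n)
  then obtain v vs' where vs: "vs = v # vs'" and l: "length vs' = Suc n" by (cases vs) auto
  have cv: "closed_v 0 v" using Suc.prems vs by auto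
  have st: "det_step (App (Val (Lam (lams (Suc n) b))) v) (lams (Suc n) (subst_t (Suc n) v b))"
    using det_step.beta[of "lams (Suc n) b" v] cv by simp
  have IH: "(det_step ^^ Suc n) (apps (Val (Lam (lams n (subst_t (Suc n) v b)))) (vs' @ ws))
      (apps (substs vs' (subst_t (Suc n) v b)) ws)"
    using Suc.hyps[of vs' "subst_t (Suc n) v b"] l Suc.prems vs by auto
  have st2: "det_step (apps (App (Val (Lam (lams (Suc n) b))) v) (vs' @ ws))
                      (apps (Val (Lam (lams n (subst_t (Suc n) v b)))) (vs' @ ws))"
    using step_apps[OF st] by simp
  show ?case using relpowp_Suc_I2[OF st2 IH] vs l by simp
qed

lemma substs_closed: "closed_t 0 t \<Longrightarrow> substs vs t = t"
  by (induct vs) auto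

lemma substs_var:
  assumes "j < length vs" "\<forall>v\<in>set vs. closed_v 0 v"
  shows "substs vs (Val (Var j)) = Val (vs ! (length vs - 1 - j))"
  using assms
proof (induct vs arbitrary: j)
  case Nil then show ?case by simp
next
  case (Cons v vs)
  show ?case
  proof (cases "j < length vs")
    case True
    then show ?thesis using Cons by (simp add: Suc_diff_Suc nth_Cons')
  next
    case False
    then have "j = length vs" using Cons by simp
    then show ?thesis using Cons substs_closed[of "Val v" vs] by simp
  qed
qed

lemma substs_App: "closed_v 0 w \<Longrightarrow> substs vs (App t w) = App (substs vs t) w"
  by (induct vs arbitrary: t) auto




lemma beta_def:
  "f = Lam (lams n b) \<Longrightarrow> length vs = Suc n \<Longrightarrow> \<forall>v\<in>set vs. closed_v 0 v \<Longrightarrow>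
   (det_step ^^ Suc n) (apps (Val f) (vs @ ws)) (apps (substs vs b) ws)"
  using beta_n by simp

lemma steps_eq: "(det_step ^^ a) x y \<Longrightarrow> a = b \<Longrightarrow> (det_step ^^ b) x y" by simp

definition sel :: "nat \<Rightarrow> nat \<Rightarrow> val" where
  "sel N i = Lam (lams (N - 1) (Val (Var (N - 1 - i))))"

lemma closed_sel[simp]: "closed_v 0 (sel N i)"
  by (simp add: sel_def)

lemma sel_step:
  assumes "i < length vs" "\<forall>v\<in>set vs. closed_v 0 v"
  shows "(det_step ^^ length vs) (apps (Val (sel (length vs) i)) (vs @ ws)) (apps (Val (vs ! i)) ws)"
proof -
  obtain n where n: "length vs = Suc n" using assms by (cases "length vs") auto
  have "(det_step ^^ Suc n) (apps (Val (sel (length vs) i)) (vs @ ws)) (apps (substs vs (Val (Var (n - i)))) ws)"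
    using beta_def[of "sel (length vs) i" n "Val (Var (n - i))" vs ws] n assms by (simp add: sel_def)
  moreover have "substs vs (Val (Var (n - i))) = Val (vs ! i)"
    using substs_var[of "n - i" vs] n assms by simp
  ultimately show ?thesis using n by simp
qed

definition nilv :: val where "nilv = Lam (lams 1 (Val (Var 0)))"
definition consv :: "val \<Rightarrow> val \<Rightarrow> val" where
  "consv h t = Lam (lams 1 (apps (Val (Var 1)) [h, t]))"

lemma closed_nilv[simp]: "closed_v 0 nilv" by (simp add: nilv_def)
lemma closed_up[simp]: "0 < k \<Longrightarrow> closed_v 0 v \<Longrightarrow> closed_v k v"
  using closed_mono(2) by blast

lemma closed_consv[simp]: "closed_v 0 h \<Longrightarrow> closed_v 0 t \<Longrightarrow> closed_v 0 (consv h t)"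
  by (auto simp: consv_def)

lemma cons_step:
  assumes "closed_v 0 h" "closed_v 0 t" "closed_v 0 a" "closed_v 0 b"
  shows "(det_step ^^ 2) (apps (Val (consv h t)) (a # b # ws)) (apps (Val a) (h # t # ws))"
  using beta_def[of "consv h t" 1 "apps (Val (Var 1)) [h, t]" "[a,b]" ws] assms
  by (simp add: consv_def numeral_2_eq_2)

lemma nil_step:
  assumes "closed_v 0 a" "closed_v 0 b"
  shows "(det_step ^^ 2) (apps (Val nilv) (a # b # ws)) (apps (Val b) ws)"
  using beta_def[of "nilv" 1 "Val (Var 0)" "[a,b]" ws] assms
  by (simp add: nilv_def numeral_2_eq_2)

section \<open>Symbols\<close>

lemma set_alph[simp]: "set (alph :: 'a::{finite,linorder} list) = UNIV"
  by (simp add: alph_def)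

lemma pos_in: "x \<in> set xs \<Longrightarrow> pos_in xs x < length xs \<and> xs ! pos_in xs x = x"
  by (induct xs) auto

lemma sym_idx_lt[simp]: "sym_idx (c::'a::{finite,linorder}) < length (alph :: 'a list)"
  using pos_in[of c "alph :: 'a list"] by (simp add: sym_idx_def)

lemma alph_nth[simp]: "(alph :: 'a::{finite,linorder} list) ! sym_idx c = c"
  using pos_in[of c "alph :: 'a list"] by (simp add: sym_idx_def)

fun aidx :: "'a::{finite,linorder} option \<Rightarrow> nat" where
  "aidx None = 0"
| "aidx (Some c) = Suc (sym_idx c)"

definition syms :: "'a::{finite,linorder} option list" where
  "syms = None # map Some alph"

lemma length_syms[simp]: "length (syms :: 'a::{finite,linorder} option list) = Suc (length (alph :: 'a list))"
  by (simp add: syms_def)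

lemma aidx_lt[simp]: "aidx (x :: 'a::{finite,linorder} option) < Suc (length (alph :: 'a list))"
  by (cases x) auto

lemma syms_nth[simp]: "(syms :: 'a::{finite,linorder} option list) ! aidx x = x"
  by (cases x) (auto simp: syms_def)

definition symsel :: "'a::{finite,linorder} option \<Rightarrow> val" where
  "symsel x = sel (Suc (length (alph :: 'a list))) (aidx x)"

lemma closed_symsel[simp]: "closed_v 0 (symsel x)" by (simp add: symsel_def)

fun tl_enc :: "'a::{finite,linorder} option list \<Rightarrow> val" where
  "tl_enc [] = nilv"
| "tl_enc (x # xs) = consv (symsel x) (tl_enc xs)"

lemma closed_tl_enc[simp]: "closed_v 0 (tl_enc xs)"
  by (induct xs) auto

lemma closed_enc_str[simp]: "closed_v 0 (enc_str (s :: 'a::{finite,linorder} list))"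
  by (induct s) auto

section \<open>States\<close>

definition qlist :: "'q::finite list" where
  "qlist = (SOME xs. distinct xs \<and> set xs = UNIV)"

lemma set_qlist[simp]: "set (qlist :: 'q::finite list) = UNIV"
proof -
  have "\<exists>xs :: 'q list. distinct xs \<and> set xs = UNIV"
    using finite_distinct_list[of "UNIV :: 'q set"] by auto
  then show ?thesis unfolding qlist_def by (rule someI2_ex) auto
qed

definition qidx :: "'q::finite \<Rightarrow> nat" where "qidx q = pos_in qlist q"

lemma qidx_lt[simp]: "qidx (q::'q::finite) < length (qlist :: 'q list)"
  using pos_in[of q qlist] by (simp add: qidx_def)

lemma qlist_nth[simp]: "(qlist :: 'q::finite list) ! qidx q = q"
  using pos_in[of q qlist] by (simp add: qidx_def)

definition qsel :: "'q::finite \<Rightarrow> val" where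
  "qsel q = sel (length (qlist :: 'q list)) (qidx q)"

lemma closed_qsel[simp]: "closed_v 0 (qsel q)" by (simp add: qsel_def)

section \<open>Reversal\<close>

definition RevCons :: val where
  "RevCons = Lam (lams 4 (apps (Val (Var 2)) [Var 2, Var 3, Lam (lams 1 (apps (Val (Var 1)) [Var 6, Var 3])), Var 0]))"
definition RevNil :: val where
  "RevNil = Lam (lams 2 (App (Val (Var 0)) (Var 1)))"
definition RevApp_b :: trm where
  "RevApp_b = apps (Val (Var 2)) [RevCons, RevNil, Var 3, Var 1, Var 0]"
definition RevApp :: val where
  "RevApp = Lam (lams 3 RevApp_b)"

lemma closed_RevCons[simp]: "closed_v 0 RevCons" by (simp add: RevCons_def)
lemma closed_RevNil[simp]: "closed_v 0 RevNil" by (simp add: RevNil_def)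
lemma closed_RevApp[simp]: "closed_v 0 RevApp" by (simp add: RevApp_def RevApp_b_def)

lemma revapp:
  assumes k: "closed_v 0 k"
  shows "(det_step ^^ (11 * length xs + 9)) (apps (Val RevApp) [RevApp, tl_enc xs, tl_enc ys, k])
           (App (Val k) (tl_enc (rev xs @ ys)))"
proof (induct xs arbitrary: ys)
  case Nil
  have s1: "(det_step ^^ 4) (apps (Val RevApp) [RevApp, tl_enc [], tl_enc ys, k])
            (apps (Val nilv) [RevCons, RevNil, RevApp, tl_enc ys, k])"
    using beta_def[OF RevApp_def, of "[RevApp, tl_enc [], tl_enc ys, k]" "[]"] k
    by (simp add: RevApp_b_def)
  have s2: "(det_step ^^ 2) (apps (Val nilv) [RevCons, RevNil, RevApp, tl_enc ys, k])
            (apps (Val RevNil) [RevApp, tl_enc ys, k])"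
    using nil_step[of RevCons RevNil "[RevApp, tl_enc ys, k]"] by simp
  have s3: "(det_step ^^ 3) (apps (Val RevNil) [RevApp, tl_enc ys, k]) (App (Val k) (tl_enc ys))"
    using beta_def[OF RevNil_def, of "[RevApp, tl_enc ys, k]" "[]"] k by simp
  show ?case using steps_trans[OF steps_trans[OF s1 s2] s3] by simp
next
  case (Cons x xs)
  have s1: "(det_step ^^ 4) (apps (Val RevApp) [RevApp, tl_enc (x # xs), tl_enc ys, k])
            (apps (Val (consv (symsel x) (tl_enc xs))) [RevCons, RevNil, RevApp, tl_enc ys, k])"
    using beta_def[OF RevApp_def, of "[RevApp, tl_enc (x#xs), tl_enc ys, k]" "[]"] k
    by (simp add: RevApp_b_def)
  have s2: "(det_step ^^ 2) (apps (Val (consv (symsel x) (tl_enc xs))) [RevCons, RevNil, RevApp, tl_enc ys, k])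
            (apps (Val RevCons) [symsel x, tl_enc xs, RevApp, tl_enc ys, k])"
    using cons_step[of "symsel x" "tl_enc xs" RevCons RevNil "[RevApp, tl_enc ys, k]"] by simp
  have s3: "(det_step ^^ 5) (apps (Val RevCons) [symsel x, tl_enc xs, RevApp, tl_enc ys, k])
             (apps (Val RevApp) [RevApp, tl_enc xs, tl_enc (x # ys), k])"
    using beta_def[OF RevCons_def, of "[symsel x, tl_enc xs, RevApp, tl_enc ys, k]" "[]"] k
    by (simp add: consv_def)
  show ?case using steps_trans[OF steps_trans[OF steps_trans[OF s1 s2] s3] Cons[of "x # ys"]] by simp
qed




section \<open>Building the output string\<close>

definition ECL :: "'a::{finite,linorder} \<Rightarrow> val" where
  "ECL c = Lam (lams (length (alph :: 'a list)) (App (Val (Var (length (alph :: 'a list) - sym_idx c))) (Var (Suc (length (alph :: 'a list))))))"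

fun ECLo :: "'a::{finite,linorder} option \<Rightarrow> val" where
  "ECLo None = nilv"
| "ECLo (Some c) = ECL c"

definition EC :: "'a::{finite,linorder} option \<Rightarrow> val" where
  "EC x = Lam (lams 2 (apps (Val (Var 1)) [Var 1, Var 2, ECLo x]))"

lemma closed_EC[simp]: "closed_v 0 (EC x)"
  by (cases x) (auto simp: EC_def ECL_def)

definition ECs :: "('a::{finite,linorder}, 'q) tm \<Rightarrow> val list" where
  "ECs M = map EC (syms :: 'a option list)"

definition BCons :: "('a::{finite,linorder}, 'q) tm \<Rightarrow> val" where
  "BCons M = Lam (lams 3 (apps (Val (Var 3)) (ECs M @ [Var 2, Var 1, Var 0])))"

definition Build_b :: "('a::{finite,linorder}, 'q) tm \<Rightarrow> trm" where
  "Build_b M = apps (Val (Var 1)) [BCons M, nilv, Var 2, Var 0]"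

definition Build :: "('a::{finite,linorder}, 'q) tm \<Rightarrow> val" where
  "Build M = Lam (lams 2 (Build_b M))"

lemma closed_ECs[simp]: "v \<in> set (ECs M) \<Longrightarrow> closed_v 0 v"
  by (auto simp: ECs_def)
lemma closed_BCons[simp]: "closed_v 0 (BCons M)"
  by (auto simp: BCons_def ECs_def)
lemma closed_Build[simp]: "closed_v 0 (Build M)"
  by (simp add: Build_def Build_b_def)

lemma length_ECs[simp]: "length (ECs (M :: ('a::{finite,linorder}, 'q) tm)) = Suc (length (alph :: 'a list))"
  by (simp add: ECs_def)

lemma ECs_nth[simp]: "ECs (M :: ('a::{finite,linorder}, 'q) tm) ! aidx (x :: 'a option) = EC x"
  unfolding ECs_def by (metis aidx_lt length_syms nth_map syms_nth)

lemma map_subst_closed[simp]: "\<forall>w\<in>set ws. closed_v 0 w \<Longrightarrow> map (subst_v k s) ws = ws"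
  by (induct ws) auto

lemma diff_lt_Suc3[simp]: "(a::nat) - b < Suc a" "(a::nat) - b < Suc (Suc a)" "(a::nat) - b < Suc (Suc (Suc a))"
  by auto

lemma build:
  fixes M :: "('a::{finite,linorder}, 'q) tm" and zs ys :: "'a list"
  shows "(det_step ^^ ((length (alph :: 'a list) + 13) * length zs + 7))
     (apps (Val (Build M)) [Build M, tl_enc (map Some zs), enc_str ys]) (Val (enc_str (rev zs @ ys)))"
proof (induct zs arbitrary: ys)
  case Nil
  have s1: "(det_step ^^ 3) (apps (Val (Build M)) [Build M, tl_enc (map Some []), enc_str ys])
            (apps (Val nilv) [BCons M, nilv, Build M, enc_str ys])"
    using beta_def[where vs="[Build M, tl_enc (map Some []), enc_str ys]" and ws="[]", OF Build_def[of M]]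
    by (simp add: Build_b_def)
  have s2: "(det_step ^^ 2) (apps (Val nilv) [BCons M, nilv, Build M, enc_str ys])
            (apps (Val nilv) [Build M, enc_str ys])"
    using nil_step[of "BCons M" nilv "[Build M, enc_str ys]"] by simp
  have s3: "(det_step ^^ 2) (apps (Val nilv) [Build M, enc_str ys]) (Val (enc_str ys))"
    using nil_step[of "Build M" "enc_str ys" "[]"] by simp
  show ?case using steps_trans[OF steps_trans[OF s1 s2] s3] by simp
next
  case (Cons z zs)
  let ?T = "tl_enc (map Some zs)"
  have s1: "(det_step ^^ 3) (apps (Val (Build M)) [Build M, tl_enc (map Some (z # zs)), enc_str ys])
            (apps (Val (consv (symsel (Some z)) ?T)) [BCons M, nilv, Build M, enc_str ys])"
    using beta_def[where vs="[Build M, tl_enc (map Some (z#zs)), enc_str ys]" and ws="[]", OF Build_def[of M]]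
    by (simp add: Build_b_def)
  have s2: "(det_step ^^ 2) (apps (Val (consv (symsel (Some z)) ?T)) [BCons M, nilv, Build M, enc_str ys])
            (apps (Val (BCons M)) [symsel (Some z), ?T, Build M, enc_str ys])"
    using cons_step[of "symsel (Some z)" ?T "BCons M" nilv "[Build M, enc_str ys]"] by simp
  have s3: "(det_step ^^ 4) (apps (Val (BCons M)) [symsel (Some z), ?T, Build M, enc_str ys])
            (apps (Val (symsel (Some z))) (ECs M @ [?T, Build M, enc_str ys]))"
    using beta_def[where vs="[symsel (Some z), ?T, Build M, enc_str ys]" and ws="[]", OF BCons_def[of M]]
    by (simp add: map_idI)
  have s4: "(det_step ^^ Suc (length (alph :: 'a list))) (apps (Val (symsel (Some z))) (ECs M @ [?T, Build M, enc_str ys]))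
            (apps (Val (EC (Some z))) [?T, Build M, enc_str ys])"
  proof -
    have e: "ECs M ! aidx (Some z) = EC (Some z)" by (rule ECs_nth)
    show ?thesis
    using sel_step[of "aidx (Some z)" "ECs M" "[?T, Build M, enc_str ys]"] unfolding e
    by (simp add: symsel_def del: aidx.simps)
  qed
  have s5: "(det_step ^^ 3) (apps (Val (EC (Some z))) [?T, Build M, enc_str ys])
            (apps (Val (Build M)) [Build M, ?T, enc_str (z # ys)])"
    using beta_def[where vs="[?T, Build M, enc_str ys]" and ws="[]", OF EC_def[of "Some z"]]
    by (simp add: ECL_def)
  show ?case
    using steps_trans[OF steps_trans[OF steps_trans[OF steps_trans[OF steps_trans[OF s1 s2] s3] s4] s5] Cons[of "z # ys"]]
    by (simp add: algebra_simps)
qed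




definition StayC :: "'q::finite \<Rightarrow> 'a::{finite,linorder} option \<Rightarrow> val" where
  "StayC q' b = Lam (lams 2 (apps (Val (Var 2)) [Var 2, qsel q', symsel b, Var 1, Var 0]))"
definition LC :: "'q::finite \<Rightarrow> 'a::{finite,linorder} option \<Rightarrow> val" where
  "LC q' b = Lam (lams 3 (apps (Val (Var 1)) [Var 1, qsel q', Var 3, Var 2, Lam (lams 1 (apps (Val (Var 1)) [symsel b, Var 2]))]))"
definition LN :: "'q::finite \<Rightarrow> 'a::{finite,linorder} option \<Rightarrow> val" where
  "LN q' b = Lam (lams 1 (apps (Val (Var 1)) [Var 1, qsel q', symsel (None :: 'a option), nilv, Lam (lams 1 (apps (Val (Var 1)) [symsel b, Var 2]))]))"
definition LeftC :: "'q::finite \<Rightarrow> 'a::{finite,linorder} option \<Rightarrow> val" where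
  "LeftC q' b = Lam (lams 2 (apps (Val (Var 1)) [LC q' b, LN q' b, Var 2, Var 0]))"
definition RC :: "'q::finite \<Rightarrow> 'a::{finite,linorder} option \<Rightarrow> val" where
  "RC q' b = Lam (lams 3 (apps (Val (Var 1)) [Var 1, qsel q', Var 3, Lam (lams 1 (apps (Val (Var 1)) [symsel b, Var 2])), Var 2]))"
definition RN :: "'q::finite \<Rightarrow> 'a::{finite,linorder} option \<Rightarrow> val" where
  "RN q' b = Lam (lams 1 (apps (Val (Var 1)) [Var 1, qsel q', symsel (None :: 'a option), Lam (lams 1 (apps (Val (Var 1)) [symsel b, Var 2])), nilv]))"
definition RightC :: "'q::finite \<Rightarrow> 'a::{finite,linorder} option \<Rightarrow> val" where
  "RightC q' b = Lam (lams 2 (apps (Val (Var 0)) [RC q' b, RN q' b, Var 2, Var 1]))"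

definition K2 :: "('a::{finite,linorder}, 'q) tm \<Rightarrow> val" where
  "K2 M = Lam (lams 0 (apps (Val (Build M)) [Build M, Var 0, enc_str ([] :: 'a list)]))"
definition FinCell :: "('a::{finite,linorder}, 'q) tm \<Rightarrow> val" where
  "FinCell M = Lam (lams 2 (apps (Val RevApp) [RevApp, Var 0, nilv, K2 M]))"

definition cell :: "('a::{finite,linorder}, 'q::finite) tm \<Rightarrow> 'q \<Rightarrow> 'a option \<Rightarrow> val" where
  "cell M q x = (if q = q_fin M then FinCell M else
     (case delta M q x of None \<Rightarrow> FinCell M
      | Some (q', b, d) \<Rightarrow> (case d of DStay \<Rightarrow> StayC q' b | DLeft \<Rightarrow> LeftC q' b | DRight \<Rightarrow> RightC q' b)))"

definition row :: "('a::{finite,linorder}, 'q::finite) tm \<Rightarrow> 'a option \<Rightarrow> val" where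
  "row M x = Lam (lams 0 (apps (Val (Var 0)) (map (\<lambda>q. cell M q x) qlist)))"

definition rows :: "('a::{finite,linorder}, 'q::finite) tm \<Rightarrow> val list" where
  "rows M = map (row M) syms"

definition Loop :: "('a::{finite,linorder}, 'q::finite) tm \<Rightarrow> val" where
  "Loop M = Lam (lams 2 (apps (Val (Var 0)) (rows M @ [Var 1, Var 2])))"

definition cfgT :: "('a::{finite,linorder}, 'q::finite) tm \<Rightarrow> 'a option list \<Rightarrow> 'a option \<Rightarrow> 'a option list \<Rightarrow> 'q \<Rightarrow> trm" where
  "cfgT M s a r q = apps (Val (Loop M)) [Loop M, qsel q, symsel a, tl_enc (rev s), tl_enc r]"

lemma closed_cells[simp]:
  "closed_v 0 (StayC q b)" "closed_v 0 (LC q b)" "closed_v 0 (LN q b)" "closed_v 0 (LeftC q b)"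
  "closed_v 0 (RC q b)" "closed_v 0 (RN q b)" "closed_v 0 (RightC q b)"
  "closed_v 0 (K2 M)" "closed_v 0 (FinCell M)"
  by (simp_all add: StayC_def LC_def LN_def LeftC_def RC_def RN_def RightC_def K2_def FinCell_def)

lemma closed_cell[simp]: "closed_v 0 (cell M q x)"
  by (auto simp: cell_def split: option.split dir.split)

lemma closed_row[simp]: "closed_v 0 (row M x)"
  by (auto simp: row_def)

lemma closed_rows[simp]: "v \<in> set (rows M) \<Longrightarrow> closed_v 0 v"
  by (auto simp: rows_def)

lemma closed_Loop[simp]: "closed_v 0 (Loop M)"
  by (auto simp: Loop_def)

lemma length_rows[simp]: "length (rows (M :: ('a::{finite,linorder}, 'q::finite) tm)) = Suc (length (alph :: 'a list))"
  by (simp add: rows_def)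

lemma rows_nth[simp]: "rows (M :: ('a::{finite,linorder}, 'q::finite) tm) ! aidx (x :: 'a option) = row M x"
  unfolding rows_def by (metis aidx_lt length_syms nth_map syms_nth)

lemma map_subst_comp[simp]: "(\<And>x. closed_v 0 (f x)) \<Longrightarrow> map (subst_v k s \<circ> f) xs = map f xs"
  by (induct xs) auto

lemma dispatch:
  fixes M :: "('a::{finite,linorder}, 'q::finite) tm"
  shows "(det_step ^^ (length (alph :: 'a list) + length (qlist :: 'q list) + 5)) (cfgT M s a r q)
    (apps (Val (cell M q a)) [Loop M, tl_enc (rev s), tl_enc r])"
proof -
  let ?L = "tl_enc (rev s)" and ?R = "tl_enc r"
  have s1: "(det_step ^^ 3) (cfgT M s a r q) (apps (Val (symsel a)) (rows M @ [qsel q, Loop M, ?L, ?R]))"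
    using beta_def[where vs="[Loop M, qsel q, symsel a]" and ws="[?L, ?R]", OF Loop_def[of M]]
    by (simp add: cfgT_def apps_append)
  have s2: "(det_step ^^ Suc (length (alph :: 'a list))) (apps (Val (symsel a)) (rows M @ [qsel q, Loop M, ?L, ?R]))
        (apps (Val (row M a)) [qsel q, Loop M, ?L, ?R])"
  proof -
    have e: "rows M ! aidx a = row M a" by (rule rows_nth)
    show ?thesis using sel_step[of "aidx a" "rows M" "[qsel q, Loop M, ?L, ?R]"] unfolding e
      by (simp add: symsel_def)
  qed
  have s3: "(det_step ^^ 1) (apps (Val (row M a)) [qsel q, Loop M, ?L, ?R])
       (apps (Val (qsel q)) (map (\<lambda>q. cell M q a) qlist @ [Loop M, ?L, ?R]))"
    using beta_def[where vs="[qsel q]" and ws="[Loop M, ?L, ?R]", OF row_def[of M a]]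
    by (simp add: apps_append)
  have s4: "(det_step ^^ length (qlist :: 'q list)) (apps (Val (qsel q)) (map (\<lambda>q. cell M q a) qlist @ [Loop M, ?L, ?R]))
       (apps (Val (cell M q a)) [Loop M, ?L, ?R])"
    using sel_step[of "qidx q" "map (\<lambda>q. cell M q a) qlist" "[Loop M, ?L, ?R]"]
    by (simp add: qsel_def)
  show ?thesis using steps_trans[OF steps_trans[OF steps_trans[OF s1 s2] s3] s4] by (simp add: add.commute add.left_commute)
qed

lemma stay_step:
  assumes "closed_v 0 S" "closed_v 0 L" "closed_v 0 R"
  shows "(det_step ^^ 3) (apps (Val (StayC q' b)) [S, L, R]) (apps (Val S) [S, qsel q', symsel b, L, R])"
  using beta_def[where vs="[S, L, R]" and ws="[]", OF StayC_def[of q' b]] assms by simp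

lemma left_cons_step:
  assumes "closed_v 0 S" "closed_v 0 c" "closed_v 0 L" "closed_v 0 R"
  shows "(det_step ^^ 9) (apps (Val (LeftC q' b)) [S, consv c L, R])
     (apps (Val S) [S, qsel q', c, L, consv (symsel b) R])"
proof -
  have s1: "(det_step ^^ 3) (apps (Val (LeftC q' b)) [S, consv c L, R]) (apps (Val (consv c L)) [LC q' b, LN q' b, S, R])"
    using beta_def[where vs="[S, consv c L, R]" and ws="[]", OF LeftC_def[of q' b]] assms by simp
  have s2: "(det_step ^^ 2) (apps (Val (consv c L)) [LC q' b, LN q' b, S, R]) (apps (Val (LC q' b)) [c, L, S, R])"
    using cons_step[of c L "LC q' b" "LN q' b" "[S, R]"] assms by simp
  have s3: "(det_step ^^ 4) (apps (Val (LC q' b)) [c, L, S, R]) (apps (Val S) [S, qsel q', c, L, consv (symsel b) R])"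
    using beta_def[where vs="[c, L, S, R]" and ws="[]", OF LC_def[of q' b]] assms by (simp add: consv_def)
  show ?thesis using steps_trans[OF steps_trans[OF s1 s2] s3] by simp
qed

lemma left_nil_step:
  assumes "closed_v 0 S" "closed_v 0 R"
  shows "(det_step ^^ 7) (apps (Val (LeftC q' (b :: 'a::{finite,linorder} option))) [S, nilv, R])
     (apps (Val S) [S, qsel q', symsel (None :: 'a option), nilv, consv (symsel b) R])"
proof -
  have s1: "(det_step ^^ 3) (apps (Val (LeftC q' b)) [S, nilv, R]) (apps (Val nilv) [LC q' b, LN q' b, S, R])"
    using beta_def[where vs="[S, nilv, R]" and ws="[]", OF LeftC_def[of q' b]] assms by simp
  have s2: "(det_step ^^ 2) (apps (Val nilv) [LC q' b, LN q' b, S, R]) (apps (Val (LN q' b)) [S, R])"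
    using nil_step[of "LC q' b" "LN q' b" "[S, R]"] assms by simp
  have s3: "(det_step ^^ 2) (apps (Val (LN q' b)) [S, R]) (apps (Val S) [S, qsel q', symsel (None :: 'a option), nilv, consv (symsel b) R])"
    using beta_def[where vs="[S, R]" and ws="[]", OF LN_def[of q' b]] assms by (simp add: consv_def numeral_2_eq_2)
  show ?thesis using steps_trans[OF steps_trans[OF s1 s2] s3] by simp
qed

lemma right_cons_step:
  assumes "closed_v 0 S" "closed_v 0 c" "closed_v 0 L" "closed_v 0 R"
  shows "(det_step ^^ 9) (apps (Val (RightC q' b)) [S, L, consv c R])
     (apps (Val S) [S, qsel q', c, consv (symsel b) L, R])"
proof -
  have s1: "(det_step ^^ 3) (apps (Val (RightC q' b)) [S, L, consv c R]) (apps (Val (consv c R)) [RC q' b, RN q' b, S, L])"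
    using beta_def[where vs="[S, L, consv c R]" and ws="[]", OF RightC_def[of q' b]] assms by simp
  have s2: "(det_step ^^ 2) (apps (Val (consv c R)) [RC q' b, RN q' b, S, L]) (apps (Val (RC q' b)) [c, R, S, L])"
    using cons_step[of c R "RC q' b" "RN q' b" "[S, L]"] assms by simp
  have s3: "(det_step ^^ 4) (apps (Val (RC q' b)) [c, R, S, L]) (apps (Val S) [S, qsel q', c, consv (symsel b) L, R])"
    using beta_def[where vs="[c, R, S, L]" and ws="[]", OF RC_def[of q' b]] assms by (simp add: consv_def)
  show ?thesis using steps_trans[OF steps_trans[OF s1 s2] s3] by simp
qed

lemma right_nil_step:
  assumes "closed_v 0 S" "closed_v 0 L"
  shows "(det_step ^^ 7) (apps (Val (RightC q' (b :: 'a::{finite,linorder} option))) [S, L, nilv])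
     (apps (Val S) [S, qsel q', symsel (None :: 'a option), consv (symsel b) L, nilv])"
proof -
  have s1: "(det_step ^^ 3) (apps (Val (RightC q' b)) [S, L, nilv]) (apps (Val nilv) [RC q' b, RN q' b, S, L])"
    using beta_def[where vs="[S, L, nilv]" and ws="[]", OF RightC_def[of q' b]] assms by simp
  have s2: "(det_step ^^ 2) (apps (Val nilv) [RC q' b, RN q' b, S, L]) (apps (Val (RN q' b)) [S, L])"
    using nil_step[of "RC q' b" "RN q' b" "[S, L]"] assms by simp
  have s3: "(det_step ^^ 2) (apps (Val (RN q' b)) [S, L]) (apps (Val S) [S, qsel q', symsel (None :: 'a option), consv (symsel b) L, nilv])"
    using beta_def[where vs="[S, L]" and ws="[]", OF RN_def[of q' b]] assms by (simp add: consv_def numeral_2_eq_2)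
  show ?thesis using steps_trans[OF steps_trans[OF s1 s2] s3] by simp
qed




definition cfgC :: "('a::{finite,linorder}, 'q::finite) tm \<Rightarrow> ('a, 'q) config \<Rightarrow> trm" where
  "cfgC M c = (case c of (s, a, r, q) \<Rightarrow> cfgT M s a r q)"

lemma valid_not_fin: "valid_tm M \<Longrightarrow> delta M q a = Some x \<Longrightarrow> q \<noteq> q_fin M"
  unfolding valid_tm_def by (metis option.discI)

lemma tm_sim:
  fixes M :: "('a::{finite,linorder}, 'q::finite) tm"
  assumes v: "valid_tm M"
  shows "tm_step M c c' \<Longrightarrow> \<exists>n. (det_step ^^ n) (cfgC M c) (cfgC M c') \<and> 1 \<le> n \<and>
          n \<le> length (alph :: 'a list) + length (qlist :: 'q list) + 14"
proof (induct rule: tm_step.induct)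
  case (stay q a q' b s r)
  have c: "cell M q a = StayC q' b" using stay valid_not_fin[OF v stay] by (simp add: cell_def)
  have d: "(det_step ^^ (length (alph :: 'a list) + length (qlist :: 'q list) + 5)) (cfgT M s a r q) (apps (Val (StayC q' b)) [Loop M, tl_enc (rev s), tl_enc r])"
    using dispatch[of M s a r q] c by simp
  have e: "(det_step ^^ 3) (apps (Val (StayC q' b)) [Loop M, tl_enc (rev s), tl_enc r]) (apps (Val (Loop M)) [Loop M, qsel q', symsel b, tl_enc (rev s), tl_enc r])"
    by (rule stay_step) simp_all
  have "(det_step ^^ (length (alph :: 'a list) + length (qlist :: 'q list) + 5 + 3)) (cfgT M s a r q) (cfgT M s b r q')"
    using steps_trans[OF d e] by (simp add: cfgT_def)
  then show ?case by (intro exI[of _ "length (alph :: 'a list) + length (qlist :: 'q list) + 5 + 3"]) (simp add: cfgC_def)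
next
  case (left q a q' b s' c r)
  have c: "cell M q a = LeftC q' b" using left valid_not_fin[OF v left] by (simp add: cell_def)
  have d: "(det_step ^^ (length (alph :: 'a list) + length (qlist :: 'q list) + 5)) (cfgT M (s' @ [c]) a r q) (apps (Val (LeftC q' b)) [Loop M, consv (symsel c) (tl_enc (rev s')), tl_enc r])"
    using dispatch[of M "s' @ [c]" a r q] c by simp
  have e: "(det_step ^^ 9) (apps (Val (LeftC q' b)) [Loop M, consv (symsel c) (tl_enc (rev s')), tl_enc r]) (apps (Val (Loop M)) [Loop M, qsel q', symsel c, tl_enc (rev s'), consv (symsel b) (tl_enc r)])"
    by (rule left_cons_step) simp_all
  have "(det_step ^^ (length (alph :: 'a list) + length (qlist :: 'q list) + 5 + 9)) (cfgT M (s' @ [c]) a r q) (cfgT M s' c (b # r) q')"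
    using steps_trans[OF d e] by (simp add: cfgT_def)
  then show ?case by (intro exI[of _ "length (alph :: 'a list) + length (qlist :: 'q list) + 5 + 9"]) (simp add: cfgC_def)
next
  case (left_end q a q' b r)
  have c: "cell M q a = LeftC q' b" using left_end valid_not_fin[OF v left_end] by (simp add: cell_def)
  have d: "(det_step ^^ (length (alph :: 'a list) + length (qlist :: 'q list) + 5)) (cfgT M [] a r q) (apps (Val (LeftC q' b)) [Loop M, nilv, tl_enc r])"
    using dispatch[of M "[]" a r q] c by simp
  have e: "(det_step ^^ 7) (apps (Val (LeftC q' b)) [Loop M, nilv, tl_enc r]) (apps (Val (Loop M)) [Loop M, qsel q', symsel (None :: 'a option), nilv, consv (symsel b) (tl_enc r)])"
    by (rule left_nil_step) simp_all
  have "(det_step ^^ (length (alph :: 'a list) + length (qlist :: 'q list) + 5 + 7)) (cfgT M [] a r q) (cfgT M [] None (b # r) q')"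
    using steps_trans[OF d e] by (simp add: cfgT_def)
  then show ?case by (intro exI[of _ "length (alph :: 'a list) + length (qlist :: 'q list) + 5 + 7"]) (simp add: cfgC_def)
next
  case (right q a q' b s c r')
  have c: "cell M q a = RightC q' b" using right valid_not_fin[OF v right] by (simp add: cell_def)
  have d: "(det_step ^^ (length (alph :: 'a list) + length (qlist :: 'q list) + 5)) (cfgT M s a (c # r') q) (apps (Val (RightC q' b)) [Loop M, tl_enc (rev s), consv (symsel c) (tl_enc r')])"
    using dispatch[of M s a "c # r'" q] c by simp
  have e: "(det_step ^^ 9) (apps (Val (RightC q' b)) [Loop M, tl_enc (rev s), consv (symsel c) (tl_enc r')]) (apps (Val (Loop M)) [Loop M, qsel q', symsel c, consv (symsel b) (tl_enc (rev s)), tl_enc r'])"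
    by (rule right_cons_step) simp_all
  have "(det_step ^^ (length (alph :: 'a list) + length (qlist :: 'q list) + 5 + 9)) (cfgT M s a (c # r') q) (cfgT M (s @ [b]) c r' q')"
    using steps_trans[OF d e] by (simp add: cfgT_def)
  then show ?case by (intro exI[of _ "length (alph :: 'a list) + length (qlist :: 'q list) + 5 + 9"]) (simp add: cfgC_def)
next
  case (right_end q a q' b s)
  have c: "cell M q a = RightC q' b" using right_end valid_not_fin[OF v right_end] by (simp add: cell_def)
  have d: "(det_step ^^ (length (alph :: 'a list) + length (qlist :: 'q list) + 5)) (cfgT M s a [] q) (apps (Val (RightC q' b)) [Loop M, tl_enc (rev s), nilv])"
    using dispatch[of M s a "[]" q] c by simp
  have e: "(det_step ^^ 7) (apps (Val (RightC q' b)) [Loop M, tl_enc (rev s), nilv]) (apps (Val (Loop M)) [Loop M, qsel q', symsel (None :: 'a option), consv (symsel b) (tl_enc (rev s)), nilv])"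
    by (rule right_nil_step) simp_all
  have "(det_step ^^ (length (alph :: 'a list) + length (qlist :: 'q list) + 5 + 7)) (cfgT M s a [] q) (cfgT M (s @ [b]) None [] q')"
    using steps_trans[OF d e] by (simp add: cfgT_def)
  then show ?case by (intro exI[of _ "length (alph :: 'a list) + length (qlist :: 'q list) + 5 + 7"]) (simp add: cfgC_def)
qed

lemma tm_sim_n:
  fixes M :: "('a::{finite,linorder}, 'q::finite) tm"
  assumes v: "valid_tm M"
  shows "(tm_step M ^^ n) c c' \<Longrightarrow> \<exists>j. (det_step ^^ j) (cfgC M c) (cfgC M c') \<and> n \<le> j \<and>
          j \<le> n * (length (alph :: 'a list) + length (qlist :: 'q list) + 14)"
proof (induct n arbitrary: c')
  case 0 then show ?case by (intro exI[of _ 0]) simp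
next
  case (Suc n)
  from Suc.prems obtain y where y: "(tm_step M ^^ n) c y" "tm_step M y c'" by (auto elim: relpowp_Suc_E)
  from Suc.hyps[OF y(1)] obtain j where j: "(det_step ^^ j) (cfgC M c) (cfgC M y)" "n \<le> j"
    "j \<le> n * (length (alph :: 'a list) + length (qlist :: 'q list) + 14)" by blast
  from tm_sim[OF v y(2)] obtain k where k: "(det_step ^^ k) (cfgC M y) (cfgC M c')" "1 \<le> k"
    "k \<le> length (alph :: 'a list) + length (qlist :: 'q list) + 14" by blast
  show ?case using steps_trans[OF j(1) k(1)] j k by (intro exI[of _ "j + k"]) auto
qed

definition clen :: "('a, 'q) config \<Rightarrow> nat" where
  "clen c = (case c of (s, a, r, q) \<Rightarrow> length s + length r)"

lemma clen_step: "tm_step M c c' \<Longrightarrow> clen c' \<le> clen c + 1"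
  by (induct rule: tm_step.induct) (auto simp: clen_def)

lemma clen_steps: "(tm_step M ^^ n) c c' \<Longrightarrow> clen c' \<le> clen c + n"
proof (induct n arbitrary: c')
  case 0 then show ?case by simp
next
  case (Suc n)
  from Suc.prems obtain y where y: "(tm_step M ^^ n) c y" "tm_step M y c'" by (auto elim: relpowp_Suc_E)
  show ?case using Suc.hyps[OF y(1)] clen_step[OF y(2)] by simp
qed

section \<open>Input phase\<close>

definition IB :: "'a::{finite,linorder} \<Rightarrow> val" where
  "IB c = Lam (lams 2 (apps (Val (Var 1)) [Var 1, Var 2, Lam (lams 1 (apps (Val (Var 1)) [symsel (Some c), Var 2]))]))"
definition IBs :: "('a::{finite,linorder}, 'q) tm \<Rightarrow> val list" where
  "IBs M = map IB (alph :: 'a list)"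
definition K1 :: "('a::{finite,linorder}, 'q::finite) tm \<Rightarrow> val" where
  "K1 M = Lam (lams 0 (apps (Val (Loop M)) [Loop M, qsel (q_in M), symsel (None :: 'a option), nilv, Var 0]))"
definition INil :: "('a::{finite,linorder}, 'q::finite) tm \<Rightarrow> val" where
  "INil M = Lam (lams 1 (apps (Val RevApp) [RevApp, Var 0, nilv, K1 M]))"
definition InLoop :: "('a::{finite,linorder}, 'q::finite) tm \<Rightarrow> val" where
  "InLoop M = Lam (lams 2 (apps (Val (Var 1)) (IBs M @ [INil M, Var 2, Var 0])))"
definition Mbar :: "('a::{finite,linorder}, 'q::finite) tm \<Rightarrow> val" where
  "Mbar M = Lam (lams 0 (apps (Val (InLoop M)) [InLoop M, Var 0, nilv]))"

lemma closed_IB[simp]: "closed_v 0 (IB c)" by (simp add: IB_def)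
lemma closed_IBs[simp]: "v \<in> set (IBs M) \<Longrightarrow> closed_v 0 v" by (auto simp: IBs_def)
lemma closed_K1[simp]: "closed_v 0 (K1 M)" by (simp add: K1_def)
lemma closed_INil[simp]: "closed_v 0 (INil M)" by (simp add: INil_def)
lemma closed_InLoop[simp]: "closed_v 0 (InLoop M)" by (auto simp: InLoop_def)
lemma closed_Mbar[simp]: "closed_v 0 (Mbar M)" by (simp add: Mbar_def)

lemma length_IBs[simp]: "length (IBs (M :: ('a::{finite,linorder}, 'q) tm)) = length (alph :: 'a list)"
  by (simp add: IBs_def)

lemma inloop:
  fixes M :: "('a::{finite,linorder}, 'q::finite) tm" and s :: "'a list"
  shows "(det_step ^^ ((length (alph :: 'a list) + 7) * length s + length (alph :: 'a list) + 6))
     (apps (Val (InLoop M)) [InLoop M, enc_str s, tl_enc acc])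
     (apps (Val RevApp) [RevApp, tl_enc (rev (map Some s) @ acc), nilv, K1 M])"
proof (induct s arbitrary: acc)
  case Nil
  let ?vs = "IBs M @ [INil M]"
  have s1: "(det_step ^^ 3) (apps (Val (InLoop M)) [InLoop M, enc_str ([] :: 'a list), tl_enc acc])
        (apps (Val (enc_str ([] :: 'a list))) (?vs @ [InLoop M, tl_enc acc]))"
    using beta_def[where vs="[InLoop M, enc_str ([] :: 'a list), tl_enc acc]" and ws="[]", OF InLoop_def[of M]]
    by (simp add: apps_append)
  have e: "enc_str ([] :: 'a list) = Lam (lams (length (alph :: 'a list)) (Val (Var 0)))" by simp
  have s2: "(det_step ^^ Suc (length (alph :: 'a list))) (apps (Val (enc_str ([] :: 'a list))) (?vs @ [InLoop M, tl_enc acc]))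
        (apps (Val (INil M)) [InLoop M, tl_enc acc])"
    using beta_def[where vs="?vs" and ws="[InLoop M, tl_enc acc]", OF e] substs_var[of 0 ?vs]
    by (simp add: nth_append)
  have s3: "(det_step ^^ 2) (apps (Val (INil M)) [InLoop M, tl_enc acc])
        (apps (Val RevApp) [RevApp, tl_enc acc, nilv, K1 M])"
    using beta_def[where vs="[InLoop M, tl_enc acc]" and ws="[]", OF INil_def[of M]]
    by (simp add: numeral_2_eq_2)
  show ?case using steps_trans[OF steps_trans[OF s1 s2] s3] by (simp add: add.commute)
next
  case (Cons c r)
  let ?vs = "IBs M @ [INil M]"
  have s1: "(det_step ^^ 3) (apps (Val (InLoop M)) [InLoop M, enc_str (c # r), tl_enc acc])
        (apps (Val (enc_str (c # r))) (?vs @ [InLoop M, tl_enc acc]))"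
    using beta_def[where vs="[InLoop M, enc_str (c # r), tl_enc acc]" and ws="[]", OF InLoop_def[of M]]
    by (simp add: apps_append)
  have e: "enc_str (c # r) = Lam (lams (length (alph :: 'a list)) (App (Val (Var (length (alph :: 'a list) - sym_idx c))) (enc_str r)))" by simp
  have sv: "substs ?vs (Val (Var (length (alph :: 'a list) - sym_idx c))) = Val (IB c)"
    using substs_var[of "length (alph :: 'a list) - sym_idx c" ?vs] sym_idx_lt[of c]
    by (simp add: nth_append IBs_def)
  have s2: "(det_step ^^ Suc (length (alph :: 'a list))) (apps (Val (enc_str (c # r))) (?vs @ [InLoop M, tl_enc acc]))
        (apps (Val (IB c)) [enc_str r, InLoop M, tl_enc acc])"
    using beta_def[where vs="?vs" and ws="[InLoop M, tl_enc acc]", OF e]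
    by (simp add: substs_App sv)
  have s3: "(det_step ^^ 3) (apps (Val (IB c)) [enc_str r, InLoop M, tl_enc acc])
        (apps (Val (InLoop M)) [InLoop M, enc_str r, tl_enc (Some c # acc)])"
    using beta_def[where vs="[enc_str r, InLoop M, tl_enc acc]" and ws="[]", OF IB_def[of c]]
    by (simp add: consv_def)
  show ?case using steps_trans[OF steps_trans[OF steps_trans[OF s1 s2] s3] Cons[of "Some c # acc"]]
    by (simp add: algebra_simps)
qed




lemma input_phase:
  fixes M :: "('a::{finite,linorder}, 'q::finite) tm" and s :: "'a list"
  shows "(det_step ^^ (1 + ((length (alph :: 'a list) + 7) * length s + length (alph :: 'a list) + 6) + (11 * length s + 9) + 1))
     (App (Val (Mbar M)) (enc_str s)) (cfgT M [] None (map Some s) (q_in M))"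
proof -
  have s0: "(det_step ^^ 1) (App (Val (Mbar M)) (enc_str s)) (apps (Val (InLoop M)) [InLoop M, enc_str s, tl_enc []])"
    using beta_def[where vs="[enc_str s]" and ws="[]", OF Mbar_def[of M]] by simp
  note s1 = inloop[where M=M and s=s and acc="[]"]
  have s2: "(det_step ^^ (11 * length s + 9)) (apps (Val RevApp) [RevApp, tl_enc (rev (map Some s) @ []), nilv, K1 M])
      (App (Val (K1 M)) (tl_enc (map Some s)))"
    using revapp[of "K1 M" "rev (map Some s)" "[]"] by simp
  have s3: "(det_step ^^ 1) (App (Val (K1 M)) (tl_enc (map Some s))) (cfgT M [] None (map Some s) (q_in M))"
    using beta_def[where vs="[tl_enc (map Some s)]" and ws="[]", OF K1_def[of M]] by (simp add: cfgT_def)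
  show ?thesis using steps_trans[OF steps_trans[OF steps_trans[OF s0 s1] s2] s3] by simp
qed

lemma final_phase:
  fixes M :: "('a::{finite,linorder}, 'q::finite) tm" and t :: "'a list"
  shows "(det_step ^^ ((length (alph :: 'a list) + length (qlist :: 'q list) + 5) + 3 + (11 * length t + 9) + 1
             + ((length (alph :: 'a list) + 13) * length t + 7)))
     (cfgT M [] None (map Some t) (q_fin M)) (Val (enc_str t))"
proof -
  have c: "cell M (q_fin M) None = FinCell M" by (simp add: cell_def)
  have s0: "(det_step ^^ (length (alph :: 'a list) + length (qlist :: 'q list) + 5)) (cfgT M [] None (map Some t) (q_fin M))
     (apps (Val (FinCell M)) [Loop M, nilv, tl_enc (map Some t)])"
    using dispatch[of M "[]" None "map Some t" "q_fin M"] c by simp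
  have s1: "(det_step ^^ 3) (apps (Val (FinCell M)) [Loop M, nilv, tl_enc (map Some t)])
      (apps (Val RevApp) [RevApp, tl_enc (map Some t), tl_enc [], K2 M])"
    using beta_def[where vs="[Loop M, nilv, tl_enc (map Some t)]" and ws="[]", OF FinCell_def[of M]] by simp
  note s2 = revapp[of "K2 M" "map Some t" "[]", OF closed_cells(8)]
  have s3: "(det_step ^^ 1) (App (Val (K2 M)) (tl_enc (rev (map Some t) @ [])))
       (apps (Val (Build M)) [Build M, tl_enc (map Some (rev t)), enc_str ([] :: 'a list)])"
    using beta_def[where vs="[tl_enc (rev (map Some t) @ [])]" and ws="[]", OF K2_def[of M]] by (simp add: rev_map)
  have s4: "(det_step ^^ ((length (alph :: 'a list) + 13) * length t + 7))
      (apps (Val (Build M)) [Build M, tl_enc (map Some (rev t)), enc_str ([] :: 'a list)]) (Val (enc_str t))"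
    using build[where M=M and zs="rev t" and ys="[]"] by simp
  show ?thesis using steps_trans[OF steps_trans[OF steps_trans[OF steps_trans[OF s0 s1] s2] s3] s4] by simp
qed




theorem mainTheorem9:
  fixes M :: "('a::{finite,linorder}, 'q::finite) tm"
    and f :: "'a list \<Rightarrow> 'a list" and g :: "nat \<Rightarrow> nat"
  assumes "valid_tm M"
    and "computes_in_time M f g"
  shows "\<exists>Mbar (A::real) (B::real) (C::real). closed Mbar \<and> A > 0 \<and> B > 0 \<and> C > 0 \<and>
           (\<forall>s :: 'a list. \<exists>n. (det_step ^^ n) (App Mbar (enc_str s)) (Val (enc_str (f s))) \<and>
              A * real (g (length s) + length s) \<le> real n \<and>
              real n \<le> B * real (g (length s) + length s) + C)"
proof -
  let ?m = "length (alph :: 'a list)" and ?K = "length (qlist :: 'q list)"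
  let ?B = "2 * ?m + ?K + 42"
  have main: "\<exists>n. (det_step ^^ n) (App (Val (Mbar M)) (enc_str s)) (Val (enc_str (f s))) \<and>
              g (length s) + length s \<le> n \<and> n \<le> ?B * (g (length s) + length s) + ?B" for s :: "'a list"
  proof -
    let ?S = "length s" and ?G = "g (length s)" and ?T = "length (f s)"
    have tm: "(tm_step M ^^ ?G) ([], None, map Some s, q_in M) ([], None, map Some (f s), q_fin M)"
      using assms(2) unfolding computes_in_time_def by blast
    obtain j where j: "(det_step ^^ j) (cfgT M [] None (map Some s) (q_in M)) (cfgT M [] None (map Some (f s)) (q_fin M))"
      "?G \<le> j" "j \<le> ?G * (?m + ?K + 14)"
      using tm_sim_n[OF assms(1) tm] by (auto simp: cfgC_def)
    have hT: "?T \<le> ?S + ?G" using clen_steps[OF tm] by (simp add: clen_def)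
    have hT2: "(?m + 24) * ?T \<le> (?m + 24) * (?S + ?G)" using hT by (rule mult_le_mono2)
    have hj: "j \<le> ?G * (?m + ?K + 14)" by fact
    note r = steps_trans[OF steps_trans[OF input_phase[where M=M and s=s] j(1)] final_phase[where M=M and t="f s"]]
    show ?thesis
      apply (rule exI, rule conjI, rule r)
      using j(2) hj hT2 apply (simp add: algebra_simps)
      done
  qed
  have all: "\<forall>s :: 'a list. \<exists>n. (det_step ^^ n) (App (Val (Mbar M)) (enc_str s)) (Val (enc_str (f s))) \<and>
              1 * real (g (length s) + length s) \<le> real n \<and>
              real n \<le> real ?B * real (g (length s) + length s) + real ?B"
  proof
    fix s :: "'a list"
    obtain n where n: "(det_step ^^ n) (App (Val (Mbar M)) (enc_str s)) (Val (enc_str (f s)))"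
      "g (length s) + length s \<le> n" "n \<le> ?B * (g (length s) + length s) + ?B"
      using main by blast
    have "real n \<le> real (?B * (g (length s) + length s) + ?B)" using n(3) by linarith
    then show "\<exists>n. (det_step ^^ n) (App (Val (Mbar M)) (enc_str s)) (Val (enc_str (f s))) \<and>
              1 * real (g (length s) + length s) \<le> real n \<and>
              real n \<le> real ?B * real (g (length s) + length s) + real ?B"
      using n by (intro exI[of _ n]) auto
  qed
  have cl: "closed (Val (Mbar M))" by (simp add: closed_def)
  show ?thesis
    apply (rule exI[of _ "Val (Mbar M)"], rule exI[of _ "1::real"], rule exI[of _ "real ?B"], rule exI[of _ "real ?B"])
    using cl all by simp
qed


end
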